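(* Consider the homophily-based model $X(t+1)=f_{\mathrm{HbM}}(X(t))$, $f_{\mathrm{HbM}}(X)=\operatorname{diag}(|X|\mathbf{1}_n)^{-1}XX^{\top}$. Let $Q_{\mathrm{HbM}}$ be the set of matrices $PYP^{\top}\in\mathcal{S}_{\mathrm{nz\text{-}row}}$ with $P$ a permutation matrix and $Y$ block diagonal with each diagonal block of the form $\alpha bb^{\top}$, $\alpha>0$, $b\in\{-1,+1\}^m$, $m\le n$. Then: (i) each element of $Q_{\mathrm{HbM}}$ of rank one is a locally stable fixed point of $f_{\mathrm{HbM}}$; (ii) for every $X(0)\in\mathcal{S}_{\mathrm{nz\text{-}row}}$, the following are equivalent: (a) the solution $X(t)$ satisfies the non-vanishing appraisal condition $\liminf_{t\to\infty}\min_{i,j}|X_{ij}(t)|>0$; (b) there exists $t_0>0$ such that $G(X(t))$ satisfies social balance for all $t\ge t_0$; (c) there exists $X^*\in Q_{\mathrm{HbM}}$ of rank one such that $\lim_{t\to\infty}X(t)=X^*$.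
   Context: $\mathcal{S}_{\mathrm{nz\text{-}row}}=\{X\in\mathbb{R}^{n\times n}:\text{every row of }X\text{ is non-zero}\}$; $|X|$ is entry-wise absolute value, $\mathbf{1}_n$ the all-ones vector. A fixed point $X^*$ of a map $f$ is locally stable if for every $\epsilon>0$ there is $\zeta>0$ such that $\max_{i,j}|X_{ij}(0)-X^*_{ij}|<\zeta$ implies $\max_{i,j}|X_{ij}(t)-X^*_{ij}|<\epsilon$ for all $t\ge0$, where $X(t+1)=f(X(t))$. $G(X)$ is the weighted digraph with adjacency matrix $X$; $G(X)$ satisfies social balance if $X_{ii}>0$ for all $i$ and $\operatorname{sign}(X_{ij})\operatorname{sign}(X_{jk})\operatorname{sign}(X_{ki})=1$ for all $i,j,k$. *)

theory Defs
  imports "Jordan_Normal_Form.Matrix" "Jordan_Normal_Form.DL_Rank" "HOL-Library.Extended_Real"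
    "HOL-Library.Liminf_Limsup"
begin

definition nz_row :: "nat \<Rightarrow> real mat set" where
  "nz_row n = {X \<in> carrier_mat n n. \<forall>i<n. \<exists>j<n. X $$ (i,j) \<noteq> 0}"

definition ones_vec :: "nat \<Rightarrow> real vec" where
  "ones_vec n = vec n (\<lambda>_. 1)"

definition abs_mat :: "real mat \<Rightarrow> real mat" where
  "abs_mat X = map_mat abs X"

definition diag_inv :: "real vec \<Rightarrow> real mat" where
  "diag_inv d = mat (dim_vec d) (dim_vec d) (\<lambda>(i,j). if i = j then inverse (d $ i) else 0)"

definition f_HbM :: "real mat \<Rightarrow> real mat" where
  "f_HbM X = diag_inv (abs_mat X *\<^sub>v ones_vec (dim_row X)) * X * transpose_mat X"

definition traj :: "real mat \<Rightarrow> nat \<Rightarrow> real mat" where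
  "traj X0 t = (f_HbM ^^ t) X0"

definition perm_mat :: "nat \<Rightarrow> (nat \<Rightarrow> nat) \<Rightarrow> real mat" where
  "perm_mat n \<sigma> = mat n n (\<lambda>(i,j). if \<sigma> i = j then 1 else 0)"

definition is_perm_mat :: "nat \<Rightarrow> real mat \<Rightarrow> bool" where
  "is_perm_mat n P \<longleftrightarrow> (\<exists>\<sigma>. \<sigma> permutes {..<n} \<and> P = perm_mat n \<sigma>)"

definition sign_block :: "real \<Rightarrow> real vec \<Rightarrow> real mat" where
  "sign_block \<alpha> b = \<alpha> \<cdot>\<^sub>m (mat_of_cols (dim_vec b) [b] * mat_of_rows (dim_vec b) [b])"

definition valid_block :: "real \<times> real vec \<Rightarrow> bool" where
  "valid_block p \<longleftrightarrow> fst p > 0 \<and> dim_vec (snd p) > 0 \<and>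
      (\<forall>i < dim_vec (snd p). snd p $ i \<in> {-1, 1})"

definition Q_HbM :: "nat \<Rightarrow> real mat set" where
  "Q_HbM n = {X. X \<in> nz_row n \<and>
     (\<exists>P bs. is_perm_mat n P \<and> list_all valid_block bs \<and>
        diag_block_mat (map (\<lambda>(\<alpha>, b). sign_block \<alpha> b) bs) \<in> carrier_mat n n \<and>
        X = P * diag_block_mat (map (\<lambda>(\<alpha>, b). sign_block \<alpha> b) bs) * transpose_mat P)}"

definition mat_rank :: "nat \<Rightarrow> real mat \<Rightarrow> nat" where
  "mat_rank n X = vec_space.rank n X"

definition locally_stable_fp :: "nat \<Rightarrow> (real mat \<Rightarrow> real mat) \<Rightarrow> real mat \<Rightarrow> bool" where
  "locally_stable_fp n f Xs \<longleftrightarrow> f Xs = Xs \<and>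
     (\<forall>\<epsilon>>0. \<exists>\<zeta>>0. \<forall>X0 \<in> carrier_mat n n.
        (\<forall>i<n. \<forall>j<n. \<bar>X0 $$ (i,j) - Xs $$ (i,j)\<bar> < \<zeta>) \<longrightarrow>
        (\<forall>t. \<forall>i<n. \<forall>j<n. \<bar>(f ^^ t) X0 $$ (i,j) - Xs $$ (i,j)\<bar> < \<epsilon>))"

definition social_balance :: "nat \<Rightarrow> real mat \<Rightarrow> bool" where
  "social_balance n X \<longleftrightarrow> (\<forall>i<n. X $$ (i,i) > 0) \<and>
     (\<forall>i<n. \<forall>j<n. \<forall>k<n. sgn (X $$ (i,j)) * sgn (X $$ (j,k)) * sgn (X $$ (k,i)) = 1)"

definition min_abs_entry :: "nat \<Rightarrow> real mat \<Rightarrow> real" where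
  "min_abs_entry n X = Min {\<bar>X $$ (i,j)\<bar> | i j. i < n \<and> j < n}"

end

theory Submission
  imports Defs "Jordan_Normal_Form.DL_Rank_Submatrix"
begin

lemma f_HbM_carrier: "X \<in> carrier_mat n n \<Longrightarrow> f_HbM X \<in> carrier_mat n n"
  unfolding f_HbM_def diag_inv_def abs_mat_def ones_vec_def by auto

lemma f_HbM_entry:
  assumes X: "X \<in> carrier_mat n n" and i: "i < n" and j: "j < n"
  shows "f_HbM X $$ (i,j) = (\<Sum>k<n. X $$ (i,k) * X $$ (j,k)) / (\<Sum>k<n. \<bar>X $$ (i,k)\<bar>)"
proof -
  define d where "d = abs_mat X *\<^sub>v ones_vec n"
  have dd: "dim_vec d = n" using X unfolding d_def abs_mat_def ones_vec_def by auto
  have di: "d $ i = (\<Sum>k<n. \<bar>X $$ (i,k)\<bar>)"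
    using X i unfolding d_def abs_mat_def ones_vec_def
    by (auto simp: scalar_prod_def row_def lessThan_atLeast0 intro!: sum.cong)
  have D: "diag_inv d \<in> carrier_mat n n" using dd unfolding diag_inv_def by auto
  have "(diag_inv d * X) $$ (i,k) = inverse (d $ i) * X $$ (i,k)" if k: "k < n" for k
  proof -
    have "(diag_inv d * X) $$ (i,k) = (\<Sum>l<n. (if i = l then inverse (d $ i) else 0) * X $$ (l,k))"
      using X i k dd unfolding diag_inv_def
      by (auto simp: scalar_prod_def row_def col_def lessThan_atLeast0 intro!: sum.cong)
    also have "\<dots> = (\<Sum>l<n. if l = i then inverse (d $ i) * X $$ (i,k) else 0)"
      by (intro sum.cong) auto
    also have "\<dots> = inverse (d $ i) * X $$ (i,k)"
      using i by simp
    finally show ?thesis .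
  qed
  define DX where "DX = diag_inv d * X"
  have DXc: "DX \<in> carrier_mat n n" using D X unfolding DX_def by auto
  have DXe: "DX $$ (i,k) = inverse (d $ i) * X $$ (i,k)" if "k < n" for k
    using \<open>\<And>k. k < n \<Longrightarrow> (diag_inv d * X) $$ (i,k) = _\<close>[OF that] unfolding DX_def .
  have "(DX * transpose_mat X) $$ (i,j) = (\<Sum>k<n. DX $$ (i,k) * X $$ (j,k))"
    using X DXc i j by (auto simp: index_mult_mat scalar_prod_def row_def col_def lessThan_atLeast0 intro!: sum.cong)
  also have "\<dots> = (\<Sum>k<n. inverse (d $ i) * X $$ (i,k) * X $$ (j,k))"
    by (intro sum.cong) (auto simp: DXe)
  finally have "(diag_inv d * X * transpose_mat X) $$ (i,j) = (\<Sum>k<n. inverse (d $ i) * X $$ (i,k) * X $$ (j,k))"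
    unfolding DX_def .
  also have "\<dots> = (\<Sum>k<n. X $$ (i,k) * X $$ (j,k)) / d $ i"
    by (simp add: sum_distrib_left divide_inverse mult.commute mult.left_commute)
  finally have e: "(diag_inv d * X * transpose_mat X) $$ (i,j) = (\<Sum>k<n. X $$ (i,k) * X $$ (j,k)) / (\<Sum>k<n. \<bar>X $$ (i,k)\<bar>)"
    unfolding di .
  have "f_HbM X = diag_inv d * X * transpose_mat X" using X unfolding f_HbM_def d_def by simp
  then show ?thesis using e by simp
qed

section \<open>Averaging lemmas\<close>

lemma avg_dec:
  fixes p q :: "nat \<Rightarrow> real"
  assumes p: "\<forall>k<n. 0 < p k" and q: "\<forall>k<n. q k \<le> U" and k0: "k0 < n"
    and qk0: "q k0 \<le> U - \<delta>" and dl: "0 \<le> \<delta>" and w: "\<forall>k<n. c * (\<Sum>l<n. p l) \<le> p k"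
  shows "(\<Sum>k<n. p k * q k) / (\<Sum>k<n. p k) \<le> U - c * \<delta>"
proof -
  define d where "d = (\<Sum>k<n. p k)"
  have dpos: "d > 0" unfolding d_def using p k0
    by (intro sum_pos2[of _ k0]) (auto simp: less_imp_le)
  have "p k0 * (U - q k0) \<le> (\<Sum>k<n. p k * (U - q k))"
    using k0 p q by (intro member_le_sum[of k0 "{..<n}" "\<lambda>k. p k * (U - q k)"]) auto
  moreover have "(\<Sum>k<n. p k * (U - q k)) = U * d - (\<Sum>k<n. p k * q k)"
    unfolding d_def by (simp add: algebra_simps sum_subtractf sum_distrib_left)
  moreover have "c * d * \<delta> \<le> p k0 * (U - q k0)"
    using w k0 p qk0 dl unfolding d_def[symmetric]
    by (intro mult_mono) auto
  ultimately have "(\<Sum>k<n. p k * q k) \<le> (U - c * \<delta>) * d" by (simp add: algebra_simps)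
  then show ?thesis using dpos unfolding d_def[symmetric] by (simp add: divide_le_eq)
qed

lemma avg_inc:
  fixes p q :: "nat \<Rightarrow> real"
  assumes p: "\<forall>k<n. 0 < p k" and q: "\<forall>k<n. L \<le> q k" and k0: "k0 < n"
    and qk0: "L + \<delta> \<le> q k0" and dl: "0 \<le> \<delta>" and w: "\<forall>k<n. c * (\<Sum>l<n. p l) \<le> p k"
  shows "L + c * \<delta> \<le> (\<Sum>k<n. p k * q k) / (\<Sum>k<n. p k)"
proof -
  have e: "(\<Sum>k<n. p k * (- q k)) = - (\<Sum>k<n. p k * q k)" by (simp add: sum_negf)
  have "(\<Sum>k<n. p k * (- q k)) / (\<Sum>k<n. p k) \<le> (- L) - c * \<delta>"
    using assms by (intro avg_dec[of n p "\<lambda>k. - q k" "- L" k0 \<delta> c]) auto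
  then have "(- (\<Sum>k<n. p k * q k)) / (\<Sum>k<n. p k) \<le> (- L) - c * \<delta>"
    unfolding e .
  then have "- ((\<Sum>k<n. p k * q k) / (\<Sum>k<n. p k)) \<le> (- L) - c * \<delta>"
    unfolding minus_divide_left .
  then show ?thesis by linarith
qed

section \<open>Positive dynamics\<close>

definition prec :: "nat \<Rightarrow> (nat \<Rightarrow> nat \<Rightarrow> nat \<Rightarrow> real) \<Rightarrow> bool" where
  "prec n a \<longleftrightarrow> (\<forall>t i j. i < n \<longrightarrow> j < n \<longrightarrow> 0 < a t i j) \<and>
     (\<forall>t i j. i < n \<longrightarrow> j < n \<longrightarrow> a (Suc t) i j = (\<Sum>k<n. a t i k * a t j k) / (\<Sum>k<n. a t i k))"

lemma prec_step_bound:
  assumes pr: "prec n a" and i: "i < n" and j: "j < n"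
    and b: "\<forall>k<n. L \<le> a t j k \<and> a t j k \<le> U"
  shows "L \<le> a (Suc t) i j \<and> a (Suc t) i j \<le> U"
proof -
  have pos: "\<forall>k<n. 0 < a t i k" using pr i unfolding prec_def by auto
  have e: "a (Suc t) i j = (\<Sum>k<n. a t i k * a t j k) / (\<Sum>k<n. a t i k)"
    using pr i j unfolding prec_def by auto
  have "(\<Sum>k<n. a t i k * a t j k) / (\<Sum>k<n. a t i k) \<le> U - 0 * 0"
    using b i pos by (intro avg_dec[of n _ _ U i]) auto
  moreover have "L + 0 * 0 \<le> (\<Sum>k<n. a t i k * a t j k) / (\<Sum>k<n. a t i k)"
    using b i pos by (intro avg_inc[of n _ L _ i]) auto
  ultimately show ?thesis using e by simp
qed

definition mxa :: "nat \<Rightarrow> (nat \<Rightarrow> nat \<Rightarrow> real) \<Rightarrow> real" where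
  "mxa n b = Max ((\<lambda>(i,j). b i j) ` ({..<n} \<times> {..<n}))"
definition mna :: "nat \<Rightarrow> (nat \<Rightarrow> nat \<Rightarrow> real) \<Rightarrow> real" where
  "mna n b = Min ((\<lambda>(i,j). b i j) ` ({..<n} \<times> {..<n}))"

lemma mxa_ge: "i < n \<Longrightarrow> j < n \<Longrightarrow> b i j \<le> mxa n b"
  unfolding mxa_def by (rule Max_ge) force+
lemma mna_le: "i < n \<Longrightarrow> j < n \<Longrightarrow> mna n b \<le> b i j"
  unfolding mna_def by (rule Min_le) force+
lemma mxa_le: "0 < n \<Longrightarrow> (\<And>i j. i < n \<Longrightarrow> j < n \<Longrightarrow> b i j \<le> U) \<Longrightarrow> mxa n b \<le> U"
  unfolding mxa_def by (subst Max_le_iff) auto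
lemma mna_ge: "0 < n \<Longrightarrow> (\<And>i j. i < n \<Longrightarrow> j < n \<Longrightarrow> L \<le> b i j) \<Longrightarrow> L \<le> mna n b"
  unfolding mna_def by (subst Min_ge_iff) auto
lemma mxa_attained: "0 < n \<Longrightarrow> \<exists>i<n. \<exists>j<n. b i j = mxa n b"
proof -
  assume "0 < n"
  then have "mxa n b \<in> (\<lambda>(i,j). b i j) ` ({..<n} \<times> {..<n})"
    unfolding mxa_def by (intro Max_in) auto
  then show ?thesis by force
qed
lemma mna_attained: "0 < n \<Longrightarrow> \<exists>i<n. \<exists>j<n. b i j = mna n b"
proof -
  assume "0 < n"
  then have "mna n b \<in> (\<lambda>(i,j). b i j) ` ({..<n} \<times> {..<n})"
    unfolding mna_def by (intro Min_in) auto
  then show ?thesis by force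
qed

lemma prec_bounds_all:
  assumes pr: "prec n a" and b: "\<forall>i<n. \<forall>j<n. L \<le> a 0 i j \<and> a 0 i j \<le> U"
  shows "\<forall>i<n. \<forall>j<n. L \<le> a t i j \<and> a t i j \<le> U"
proof (induction t)
  case 0 then show ?case using b by auto
next
  case (Suc t) then show ?case using prec_step_bound[OF pr] by blast
qed

lemma prec_contract:
  assumes pr: "prec n a" and n: "0 < n" and c: "0 \<le> c"
    and w: "\<forall>t i k. i < n \<longrightarrow> k < n \<longrightarrow> c * (\<Sum>l<n. a t i l) \<le> a t i k"
  shows "mxa n (a (Suc (Suc t))) - mna n (a (Suc (Suc t))) \<le> (1 - 2*c^2) * (mxa n (a t) - mna n (a t))"
proof -
  define U where "U = mxa n (a t)"
  define L where "L = mna n (a t)"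
  have b0: "\<forall>i<n. \<forall>j<n. L \<le> a t i j \<and> a t i j \<le> U"
    unfolding U_def L_def using mxa_ge mna_le by blast
  have b1: "\<forall>i<n. \<forall>j<n. L \<le> a (Suc t) i j \<and> a (Suc t) i j \<le> U"
    using prec_step_bound[OF pr] b0 by blast
  have LU: "L \<le> U" using b0 n by force
  obtain k0 l0 where k0: "k0 < n" "l0 < n" "a t k0 l0 = L" using mna_attained[OF n] unfolding L_def by blast
  obtain k1 l1 where k1: "k1 < n" "l1 < n" "a t k1 l1 = U" using mxa_attained[OF n] unfolding U_def by blast
  have pos: "\<forall>t i j. i < n \<longrightarrow> j < n \<longrightarrow> 0 < a t i j" using pr unfolding prec_def by auto
  have rec: "\<And>t i j. i < n \<Longrightarrow> j < n \<Longrightarrow> a (Suc t) i j = (\<Sum>k<n. a t i k * a t j k) / (\<Sum>k<n. a t i k)"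
    using pr unfolding prec_def by auto
  have up1: "a (Suc t) j k0 \<le> U - c * (U - L)" if j: "j < n" for j
    unfolding rec[OF j k0(1)]
    using pos j b0 k0 LU w by (intro avg_dec[of n _ _ U l0]) auto
  have lo1: "L + c * (U - L) \<le> a (Suc t) j k1" if j: "j < n" for j
    unfolding rec[OF j k1(1)]
    using pos j b0 k1 LU w by (intro avg_inc[of n _ L _ l1]) auto
  have up2: "a (Suc (Suc t)) i j \<le> U - c * (c * (U - L))" if i: "i < n" and j: "j < n" for i j
    unfolding rec[OF i j]
    using pos i j b1 k0 LU w c up1[OF j] by (intro avg_dec[of n _ _ U k0]) auto
  have lo2: "L + c * (c * (U - L)) \<le> a (Suc (Suc t)) i j" if i: "i < n" and j: "j < n" for i j
    unfolding rec[OF i j]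
    using pos i j b1 k1 LU w c lo1[OF j] by (intro avg_inc[of n _ L _ k1]) auto
  have "mxa n (a (Suc (Suc t))) \<le> U - c * (c * (U - L))" using up2 n by (intro mxa_le) auto
  moreover have "L + c * (c * (U - L)) \<le> mna n (a (Suc (Suc t)))" using lo2 n by (intro mna_ge) auto
  ultimately show ?thesis unfolding U_def[symmetric] L_def[symmetric]
    by (simp add: power2_eq_square algebra_simps)
qed

lemma prec_converge:
  assumes pr: "prec n a" and n: "0 < n"
  shows "\<exists>Lim>0. \<forall>i<n. \<forall>j<n. (\<lambda>t. a t i j) \<longlonglongrightarrow> Lim"
proof -
  define M where "M t = mxa n (a t)" for t
  define m where "m t = mna n (a t)" for t
  have pos: "\<forall>t i j. i < n \<longrightarrow> j < n \<longrightarrow> 0 < a t i j" using pr unfolding prec_def by auto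
  have bt: "\<forall>i<n. \<forall>j<n. m t \<le> a t i j \<and> a t i j \<le> M t" for t
    unfolding M_def m_def using mxa_ge mna_le by blast
  have m0: "0 < m 0" using mna_attained[OF n, of "a 0"] pos unfolding m_def by metis
  have ball: "\<forall>i<n. \<forall>j<n. m 0 \<le> a t i j \<and> a t i j \<le> M 0" for t
    using prec_bounds_all[OF pr bt[of 0]] by blast
  have M0: "0 < M 0" using ball[of 0] m0 n by force
  define c where "c = m 0 / (n * M 0)"
  have c: "0 < c" unfolding c_def using m0 M0 n by simp
  have w: "\<forall>t i k. i < n \<longrightarrow> k < n \<longrightarrow> c * (\<Sum>l<n. a t i l) \<le> a t i k"
  proof (intro allI impI)
    fix t i k assume i: "i < n" and k: "k < n"
    have "(\<Sum>l<n. a t i l) \<le> of_nat (card {..<n}) * M 0"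
      using ball i by (intro sum_bounded_above) auto
    then have "c * (\<Sum>l<n. a t i l) \<le> c * (n * M 0)" using c by (intro mult_left_mono) auto
    also have "\<dots> = m 0" unfolding c_def using M0 n by simp
    finally show "c * (\<Sum>l<n. a t i l) \<le> a t i k" using ball[of t] i k by (meson order_trans)
  qed
  have stp: "m t \<le> a (Suc t) i j \<and> a (Suc t) i j \<le> M t" if ij: "i < n" "j < n" for t i j
  proof -
    have "\<forall>k<n. m t \<le> a t j k \<and> a t j k \<le> M t" using bt[of t] ij(2) by blast
    then show ?thesis using prec_step_bound[OF pr ij] by blast
  qed
  have Mdec: "M (Suc t) \<le> M t" for t
    unfolding M_def[of "Suc t"] by (rule mxa_le[OF n]) (use stp in blast)
  have minc: "m t \<le> m (Suc t)" for t
    unfolding m_def[of "Suc t"] by (rule mna_ge[OF n]) (use stp in blast)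
  have mM: "m t \<le> M t" for t using bt[of t] n by force
  have "decseq M" using Mdec by (intro decseq_SucI)
  moreover have "\<forall>t. m 0 \<le> M t"
  proof
    fix t
    have "m 0 \<le> a t 0 0" using ball[of t] n by blast
    moreover have "a t 0 0 \<le> M t" using bt[of t] n by blast
    ultimately show "m 0 \<le> M t" by linarith
  qed
  ultimately obtain LM where LM: "M \<longlonglongrightarrow> LM" "\<forall>t. LM \<le> M t" by (rule decseq_convergent)
  have "incseq m" using minc by (intro incseq_SucI)
  moreover have "\<forall>t. m t \<le> M 0"
  proof
    fix t
    have "a t 0 0 \<le> M 0" using ball[of t] n by blast
    moreover have "m t \<le> a t 0 0" using bt[of t] n by blast
    ultimately show "m t \<le> M 0" by linarith
  qed
  ultimately obtain Lm where Lm: "m \<longlonglongrightarrow> Lm" "\<forall>t. m t \<le> Lm" by (rule incseq_convergent)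
  define r where "r = max 0 (1 - 2 * c^2)"
  have r0: "0 \<le> r" and r1: "r < 1" unfolding r_def using c by auto
  have spread: "M (2*k) - m (2*k) \<le> r^k * (M 0 - m 0)" for k
  proof (induction k)
    case 0 then show ?case by simp
  next
    case (Suc k)
    have "M (2 * Suc k) - m (2 * Suc k) \<le> (1 - 2*c^2) * (M (2*k) - m (2*k))"
      using prec_contract[OF pr n less_imp_le[OF c] w, of "2*k"] by (simp add: M_def m_def)
    also have "\<dots> \<le> r * (M (2*k) - m (2*k))"
      unfolding r_def using mM[of "2*k"] by (intro mult_right_mono) auto
    also have "\<dots> \<le> r * (r^k * (M 0 - m 0))" using Suc r0 by (intro mult_left_mono) auto
    finally show ?case by simp
  qed
  have "(\<lambda>k. r^k * (M 0 - m 0)) \<longlonglongrightarrow> 0 * (M 0 - m 0)"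
    using r0 r1 by (intro tendsto_intros) auto
  moreover have le: "LM - Lm \<le> r^k * (M 0 - m 0)" for k
  proof -
    have "LM \<le> M (2*k)" using LM(2) by blast
    moreover have "m (2*k) \<le> Lm" using Lm(2) by blast
    ultimately show ?thesis using spread[of k] by linarith
  qed
  ultimately have "LM - Lm \<le> 0 * (M 0 - m 0)"
    by (intro LIMSEQ_le[OF tendsto_const]) auto
  moreover have "Lm \<le> LM" using LIMSEQ_le[OF Lm(1) LM(1)] mM by auto
  ultimately have eq: "LM = Lm" by simp
  have "\<forall>i<n. \<forall>j<n. (\<lambda>t. a t i j) \<longlonglongrightarrow> Lm"
  proof (intro allI impI)
    fix i j assume i: "i < n" and j: "j < n"
    show "(\<lambda>t. a t i j) \<longlonglongrightarrow> Lm"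
      using Lm(1) LM(1)[unfolded eq]
      by (rule tendsto_sandwich[rotated 2]) (use bt i j in auto)
  qed
  moreover have "0 < Lm" using m0 Lm(2) by (meson less_le_trans)
  ultimately show ?thesis by blast
qed

section \<open>Entry recurrence\<close>

definition hrec :: "nat \<Rightarrow> (nat \<Rightarrow> nat \<Rightarrow> nat \<Rightarrow> real) \<Rightarrow> bool" where
  "hrec n x \<longleftrightarrow> (\<forall>t i j. i < n \<longrightarrow> j < n \<longrightarrow>
     x (Suc t) i j = (\<Sum>k<n. x t i k * x t j k) / (\<Sum>k<n. \<bar>x t i k\<bar>))"

lemma sgn_pm: "c = 1 \<or> c = -1 \<Longrightarrow> c * c = (1::real)" by auto
lemma cc_abs: "c = 1 \<or> c = -1 \<Longrightarrow> d = 1 \<or> d = -1 \<Longrightarrow> \<bar>c * d\<bar> = (1::real)" by auto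

lemma gauge_step:
  assumes hr: "hrec n x" and c: "\<forall>i<n. c i = 1 \<or> c i = -1"
    and inv: "\<forall>i<n. \<forall>j<n. x t i j = c i * c j * \<bar>x t i j\<bar> \<and> x t i j \<noteq> 0"
    and i: "i < n" and j: "j < n"
  shows "x (Suc t) i j = c i * c j * ((\<Sum>k<n. \<bar>x t i k\<bar> * \<bar>x t j k\<bar>) / (\<Sum>k<n. \<bar>x t i k\<bar>))"
    and "0 < (\<Sum>k<n. \<bar>x t i k\<bar> * \<bar>x t j k\<bar>) / (\<Sum>k<n. \<bar>x t i k\<bar>)"
proof -
  have "x t i k * x t j k = c i * c j * (\<bar>x t i k\<bar> * \<bar>x t j k\<bar>)" if k: "k < n" for k
  proof -
    have "x t i k * x t j k = (c i * c k * \<bar>x t i k\<bar>) * (c j * c k * \<bar>x t j k\<bar>)"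
      using inv i j k by metis
    also have "\<dots> = c i * c j * (c k * c k) * (\<bar>x t i k\<bar> * \<bar>x t j k\<bar>)" by (simp add: algebra_simps)
    finally show ?thesis using sgn_pm c k by simp
  qed
  then have "(\<Sum>k<n. x t i k * x t j k) = c i * c j * (\<Sum>k<n. \<bar>x t i k\<bar> * \<bar>x t j k\<bar>)"
    by (simp add: sum_distrib_left)
  then show "x (Suc t) i j = c i * c j * ((\<Sum>k<n. \<bar>x t i k\<bar> * \<bar>x t j k\<bar>) / (\<Sum>k<n. \<bar>x t i k\<bar>))"
    using hr i j unfolding hrec_def by simp
  have "0 < (\<Sum>k<n. \<bar>x t i k\<bar> * \<bar>x t j k\<bar>)"
    using inv i j by (intro sum_pos2[of _ i]) auto
  moreover have "0 < (\<Sum>k<n. \<bar>x t i k\<bar>)"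
    using inv i by (intro sum_pos2[of _ i]) auto
  ultimately show "0 < (\<Sum>k<n. \<bar>x t i k\<bar> * \<bar>x t j k\<bar>) / (\<Sum>k<n. \<bar>x t i k\<bar>)" by simp
qed

lemma gauge_inv:
  assumes hr: "hrec n x" and c: "\<forall>i<n. c i = 1 \<or> c i = -1"
    and x0: "\<forall>i<n. \<forall>j<n. x 0 i j = c i * c j * \<bar>x 0 i j\<bar> \<and> x 0 i j \<noteq> 0"
  shows "\<forall>i<n. \<forall>j<n. x t i j = c i * c j * \<bar>x t i j\<bar> \<and> x t i j \<noteq> 0"
proof (induction t)
  case 0 then show ?case using x0 by simp
next
  case (Suc t)
  show ?case
  proof (intro allI impI)
    fix i j assume i: "i < n" and j: "j < n"
    note g = gauge_step[OF hr c Suc i j]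
    have cc: "\<bar>c i * c j\<bar> = 1" using c i j by (intro cc_abs) auto
    have "\<bar>x (Suc t) i j\<bar> = (\<Sum>k<n. \<bar>x t i k\<bar> * \<bar>x t j k\<bar>) / (\<Sum>k<n. \<bar>x t i k\<bar>)"
      unfolding g(1) abs_mult[of "c i * c j"] cc using abs_of_pos[OF g(2)] by simp
    then show "x (Suc t) i j = c i * c j * \<bar>x (Suc t) i j\<bar> \<and> x (Suc t) i j \<noteq> 0"
      using g cc by auto
  qed
qed

lemma gauge_prec:
  assumes hr: "hrec n x" and c: "\<forall>i<n. c i = 1 \<or> c i = -1"
    and x0: "\<forall>i<n. \<forall>j<n. x 0 i j = c i * c j * \<bar>x 0 i j\<bar> \<and> x 0 i j \<noteq> 0"
  shows "prec n (\<lambda>t i j. \<bar>x t i j\<bar>)"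
  unfolding prec_def
proof (intro conjI allI impI)
  note inv = gauge_inv[OF hr c x0]
  fix t i j assume i: "i < n" and j: "j < n"
  show "0 < \<bar>x t i j\<bar>" using inv i j by auto
  note g = gauge_step[OF hr c inv i j]
  have cc: "\<bar>c i * c j\<bar> = 1" using c i j by (intro cc_abs) auto
  show "\<bar>x (Suc t) i j\<bar> = (\<Sum>k<n. \<bar>x t i k\<bar> * \<bar>x t j k\<bar>) / (\<Sum>k<n. \<bar>x t i k\<bar>)"
    unfolding g(1) abs_mult[of "c i * c j"] cc using abs_of_pos[OF g(2)] by simp
qed

section \<open>Alignment\<close>

lemma hrec_abs_step:
  assumes hr: "hrec n x" and i: "i < n" and j: "j < n"
  shows "\<bar>x (Suc t) i j\<bar> \<le> (\<Sum>k<n. \<bar>x t i k\<bar> * \<bar>x t j k\<bar>) / (\<Sum>k<n. \<bar>x t i k\<bar>)"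
proof -
  have e: "x (Suc t) i j = (\<Sum>k<n. x t i k * x t j k) / (\<Sum>k<n. \<bar>x t i k\<bar>)"
    using hr i j unfolding hrec_def by auto
  have "\<bar>\<Sum>k<n. x t i k * x t j k\<bar> \<le> (\<Sum>k<n. \<bar>x t i k\<bar> * \<bar>x t j k\<bar>)"
    using sum_abs[of "\<lambda>k. x t i k * x t j k" "{..<n}"] by (simp add: abs_mult)
  then show ?thesis unfolding e abs_divide
    by (simp add: divide_right_mono sum_nonneg)
qed

lemma sum_cancel:
  fixes s :: "nat \<Rightarrow> real"
  assumes l: "l < n" and l': "l' < n" and sl: "e \<le> s l" and sl': "s l' \<le> - e"
  shows "\<bar>\<Sum>k<n. s k\<bar> \<le> (\<Sum>k<n. \<bar>s k\<bar>) - 2 * e"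
proof -
  have a: "\<bar>s l'\<bar> - s l' \<le> (\<Sum>k<n. \<bar>s k\<bar> - s k)"
    using l' by (intro member_le_sum[of l' "{..<n}" "\<lambda>k. \<bar>s k\<bar> - s k"]) auto
  have b: "\<bar>s l\<bar> + s l \<le> (\<Sum>k<n. \<bar>s k\<bar> + s k)"
    using l by (intro member_le_sum[of l "{..<n}" "\<lambda>k. \<bar>s k\<bar> + s k"]) auto
  have "(\<Sum>k<n. s k) \<le> (\<Sum>k<n. \<bar>s k\<bar>) - 2 * e"
    using a sl' by (simp add: sum_subtractf)
  moreover have "- (\<Sum>k<n. s k) \<le> (\<Sum>k<n. \<bar>s k\<bar>) - 2 * e"
    using b sl by (simp add: sum.distrib)
  ultimately show ?thesis by (simp add: abs_le_iff)
qed

definition misal :: "nat \<Rightarrow> (nat \<Rightarrow> nat \<Rightarrow> real) \<Rightarrow> bool" where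
  "misal n b \<longleftrightarrow> (\<exists>j<n. \<exists>k<n. \<exists>l<n. \<exists>l'<n. b j l * b k l > 0 \<and> b j l' * b k l' < 0)"

locale lowbd =
  fixes n :: nat and x :: "nat \<Rightarrow> nat \<Rightarrow> nat \<Rightarrow> real" and \<epsilon> :: real and T :: nat
  assumes hr: "hrec n x" and n: "0 < n" and eps: "0 < \<epsilon>"
    and low: "\<And>t i j. T \<le> t \<Longrightarrow> i < n \<Longrightarrow> j < n \<Longrightarrow> \<epsilon> \<le> \<bar>x t i j\<bar>"
begin

definition Mx :: "nat \<Rightarrow> real" where "Mx t = mxa n (\<lambda>i j. \<bar>x t i j\<bar>)"

lemma Mx_ge: "i < n \<Longrightarrow> j < n \<Longrightarrow> \<bar>x t i j\<bar> \<le> Mx t"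
  unfolding Mx_def by (rule mxa_ge)

lemma pos: "T \<le> t \<Longrightarrow> i < n \<Longrightarrow> j < n \<Longrightarrow> 0 < \<bar>x t i j\<bar>"
  using low eps by (meson less_le_trans)

lemma step_le:
  assumes t: "T \<le> t" and i: "i < n" and j: "j < n"
    and q: "\<forall>k<n. \<bar>x t j k\<bar> \<le> U" and k0: "k0 < n" and qk0: "\<bar>x t j k0\<bar> \<le> U - \<delta>" and dl: "0 \<le> \<delta>"
    and w: "\<forall>k<n. c * (\<Sum>l<n. \<bar>x t i l\<bar>) \<le> \<bar>x t i k\<bar>"
  shows "\<bar>x (Suc t) i j\<bar> \<le> U - c * \<delta>"
proof -
  have "(\<Sum>k<n. \<bar>x t i k\<bar> * \<bar>x t j k\<bar>) / (\<Sum>k<n. \<bar>x t i k\<bar>) \<le> U - c * \<delta>"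
    using pos[OF t i] q k0 qk0 dl w by (intro avg_dec[of n _ _ U k0]) auto
  then show ?thesis using hrec_abs_step[OF hr i j, of t] by linarith
qed

lemma Mx_dec: "T \<le> t \<Longrightarrow> Mx (Suc t) \<le> Mx t"
  unfolding Mx_def[of "Suc t"]
proof (intro mxa_le[OF n])
  fix i j assume t: "T \<le> t" and i: "i < n" and j: "j < n"
  have q: "\<forall>k<n. \<bar>x t j k\<bar> \<le> Mx t" using Mx_ge j by blast
  have w: "\<forall>k<n. 0 * (\<Sum>l<n. \<bar>x t i l\<bar>) \<le> \<bar>x t i k\<bar>" by simp
  have h0: "\<bar>x t j 0\<bar> \<le> Mx t - 0" using q n by simp
  show "\<bar>x (Suc t) i j\<bar> \<le> Mx t"
    using step_le[OF t i j q n h0 order_refl w] by simp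
qed

lemma Mx_le_T: "T \<le> t \<Longrightarrow> Mx t \<le> Mx T"
proof (induction t rule: dec_induct)
  case base then show ?case by simp
next
  case (step t) then show ?case using Mx_dec[of t] by simp
qed

lemma Mx_ge_eps: "T \<le> t \<Longrightarrow> \<epsilon> \<le> Mx t"
  using low[of t 0 0] Mx_ge[of 0 0 t] n by auto

definition cw :: real where "cw = \<epsilon> / (n * Mx T)"
definition d0 :: real where "d0 = 2 * \<epsilon>^2 / (n * Mx T)"

lemma MxT_pos: "0 < Mx T" using Mx_ge_eps[of T] eps by simp

lemma cw_pos: "0 < cw" unfolding cw_def using MxT_pos eps n by simp
lemma d0_pos: "0 < d0" unfolding d0_def using MxT_pos eps n by simp

lemma rowsum_le: "T \<le> t \<Longrightarrow> i < n \<Longrightarrow> (\<Sum>l<n. \<bar>x t i l\<bar>) \<le> n * Mx T"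
proof -
  assume t: "T \<le> t" and i: "i < n"
  have "(\<Sum>l<n. \<bar>x t i l\<bar>) \<le> of_nat (card {..<n}) * Mx T"
  proof (intro sum_bounded_above)
    fix l assume "l \<in> {..<n}"
    then have "\<bar>x t i l\<bar> \<le> Mx t" using Mx_ge[OF i] by simp
    then show "\<bar>x t i l\<bar> \<le> Mx T" using Mx_le_T[OF t] by linarith
  qed
  then show ?thesis by simp
qed

lemma weight: "T \<le> t \<Longrightarrow> i < n \<Longrightarrow> k < n \<Longrightarrow> cw * (\<Sum>l<n. \<bar>x t i l\<bar>) \<le> \<bar>x t i k\<bar>"
proof -
  assume t: "T \<le> t" and i: "i < n" and k: "k < n"
  have "cw * (\<Sum>l<n. \<bar>x t i l\<bar>) \<le> cw * (n * Mx T)"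
    using rowsum_le[OF t i] cw_pos by (intro mult_left_mono) auto
  also have "\<dots> = \<epsilon>" unfolding cw_def using MxT_pos n by simp
  finally show ?thesis using low[OF t i k] by linarith
qed

lemma mis_step1:
  assumes t: "T \<le> t" and j: "j < n" and k: "k < n" and l: "l < n" and l': "l' < n"
    and p: "x t j l * x t k l > 0" and m: "x t j l' * x t k l' < 0"
  shows "\<bar>x (Suc t) j k\<bar> \<le> Mx t - d0"
proof -
  define d where "d = (\<Sum>i<n. \<bar>x t j i\<bar>)"
  have dpos: "0 < d" unfolding d_def using pos[OF t j] j by (intro sum_pos2[of _ j]) (auto simp: less_imp_le)
  have dle: "d \<le> n * Mx T" unfolding d_def using rowsum_le[OF t j] .
  have ee: "\<epsilon>^2 \<le> \<bar>x t j i\<bar> * \<bar>x t k i\<bar>" if "i < n" for i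
    using low[OF t j that] low[OF t k that] eps unfolding power2_eq_square
    by (intro mult_mono) auto
  have s1: "\<epsilon>^2 \<le> x t j l * x t k l" using ee[OF l] p by (simp add: abs_mult[symmetric])
  have s2: "x t j l' * x t k l' \<le> - (\<epsilon>^2)" using ee[OF l'] m by (simp add: abs_mult[symmetric])
  have e: "x (Suc t) j k = (\<Sum>i<n. x t j i * x t k i) / d"
    using hr j k unfolding hrec_def d_def by auto
  have "\<bar>\<Sum>i<n. x t j i * x t k i\<bar> \<le> (\<Sum>i<n. \<bar>x t j i * x t k i\<bar>) - 2 * \<epsilon>^2"
    using sum_cancel[OF l l' s1 s2] .
  then have A: "\<bar>x (Suc t) j k\<bar> \<le> ((\<Sum>i<n. \<bar>x t j i\<bar> * \<bar>x t k i\<bar>) - 2 * \<epsilon>^2) / d"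
    unfolding e abs_divide using dpos by (simp add: divide_right_mono abs_mult)
  have B: "(\<Sum>i<n. \<bar>x t j i\<bar> * \<bar>x t k i\<bar>) / d \<le> Mx t - 0 * 0"
    unfolding d_def using pos[OF t j] Mx_ge[OF k] j by (intro avg_dec[of n _ _ _ j]) auto
  have C: "d0 \<le> 2 * \<epsilon>^2 / d" unfolding d0_def using dpos dle eps
    by (intro divide_left_mono) auto
  have "((\<Sum>i<n. \<bar>x t j i\<bar> * \<bar>x t k i\<bar>) - 2 * \<epsilon>^2) / d = (\<Sum>i<n. \<bar>x t j i\<bar> * \<bar>x t k i\<bar>) / d - 2 * \<epsilon>^2 / d"
    by (simp add: diff_divide_distrib)
  then show ?thesis using A B C by linarith
qed

lemma mis_dec:
  assumes t: "T \<le> t" and mis: "misal n (x t)"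
  shows "Mx (t + 3) \<le> Mx t - cw * (cw * d0)"
proof -
  obtain j k l l' where jk: "j < n" "k < n" "l < n" "l' < n"
    and p: "x t j l * x t k l > 0" and m: "x t j l' * x t k l' < 0"
    using mis unfolding misal_def by blast
  have s1: "\<bar>x (Suc t) j k\<bar> \<le> Mx t - d0" using mis_step1[OF t jk p m] .
  have t1: "T \<le> Suc t" and t2: "T \<le> Suc (Suc t)" using t by auto
  have b1: "\<forall>k<n. \<bar>x (Suc t) j k\<bar> \<le> Mx t" using Mx_ge jk Mx_dec[OF t] by (meson order_trans)
  have s2: "\<bar>x (Suc (Suc t)) a j\<bar> \<le> Mx t - cw * d0" if a: "a < n" for a
  proof -
    have "\<forall>k'<n. \<bar>x (Suc t) j k'\<bar> \<le> Mx t" using Mx_ge jk(1) Mx_dec[OF t] by (meson order_trans)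
    then show ?thesis
      using step_le[OF t1 a jk(1), of "Mx t" k d0 cw] s1 jk d0_pos weight[OF t1 a] by auto
  qed
  have s3: "\<bar>x (Suc (Suc (Suc t))) a b\<bar> \<le> Mx t - cw * (cw * d0)" if a: "a < n" and b: "b < n" for a b
  proof -
    have "\<forall>k'<n. \<bar>x (Suc (Suc t)) b k'\<bar> \<le> Mx t"
      using Mx_ge b Mx_dec[OF t] Mx_dec[OF t1] by (meson order_trans)
    then show ?thesis
      using step_le[OF t2 a b, of "Mx t" j "cw * d0" cw] s2[OF b] jk d0_pos cw_pos weight[OF t2 a] by auto
  qed
  show ?thesis unfolding Mx_def[of "t+3"] using s3 n by (intro mxa_le) (auto simp: numeral_3_eq_3)
qed

lemma eventually_aligned: "\<exists>t1. \<forall>t\<ge>t1. \<not> misal n (x t)"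
proof (rule ccontr)
  assume "\<not> ?thesis"
  then have inf: "\<forall>t1. \<exists>t\<ge>t1. misal n (x t)" by blast
  define D where "D = cw * (cw * d0)"
  have D: "0 < D" unfolding D_def using cw_pos d0_pos by simp
  have "\<exists>t\<ge>T. Mx t \<le> Mx T - real m * D" for m
  proof (induction m)
    case 0 then show ?case by auto
  next
    case (Suc m)
    then obtain t where t: "T \<le> t" "Mx t \<le> Mx T - real m * D" by blast
    obtain s where s: "t \<le> s" "misal n (x s)" using inf by blast
    have "Mx (s + 3) \<le> Mx s - D" using mis_dec[of s] s t unfolding D_def by auto
    moreover have "Mx s \<le> Mx t"
      using s(1)
    proof (induction s rule: dec_induct)
      case base then show ?case by simp
    next
      case (step u) then show ?case using Mx_dec[of u] t by simp
    qed
    ultimately show ?case using t s by (intro exI[of _ "s+3"]) (auto simp: algebra_simps)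
  qed
  moreover obtain m :: nat where "Mx T / D < real m" using reals_Archimedean2 by blast
  ultimately obtain t where t: "T \<le> t" "Mx t \<le> Mx T - real m * D" by blast
  have "Mx T < real m * D" using \<open>Mx T / D < real m\<close> D by (simp add: divide_less_eq)
  then show False using t Mx_ge_eps[OF t(1)] eps by linarith
qed


lemma diag_pos: assumes t: "T \<le> s" and i: "i < n" shows "0 < x (Suc s) i i"
proof -
  have "x (Suc s) i i = (\<Sum>k<n. x s i k * x s i k) / (\<Sum>k<n. \<bar>x s i k\<bar>)"
    using hr i unfolding hrec_def by auto
  moreover have "0 < (\<Sum>k<n. x s i k * x s i k)"
  proof (rule sum_pos2[of _ i])
    show "0 < x s i i * x s i i" using pos[OF t i i] by (metis abs_mult_self_eq mult_pos_pos)
  qed (use i in auto)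
  moreover have "0 < (\<Sum>k<n. \<bar>x s i k\<bar>)"
    using pos[OF t i] i by (intro sum_pos2[of _ i]) (auto simp: less_imp_le)
  ultimately show ?thesis by simp
qed

lemma sgn_sym: assumes t: "T \<le> s" and i: "i < n" and j: "j < n"
  shows "sgn (x (Suc s) i j) = sgn (x (Suc s) j i)"
proof -
  have e1: "x (Suc s) i j = (\<Sum>k<n. x s i k * x s j k) / (\<Sum>k<n. \<bar>x s i k\<bar>)"
    using hr i j unfolding hrec_def by auto
  have e2: "x (Suc s) j i = (\<Sum>k<n. x s i k * x s j k) / (\<Sum>k<n. \<bar>x s j k\<bar>)"
    using hr i j unfolding hrec_def by (auto simp: mult.commute)
  have "0 < (\<Sum>k<n. \<bar>x s i k\<bar>)"
    using pos[OF t i] i by (intro sum_pos2[of _ i]) (auto simp: less_imp_le)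
  moreover have "0 < (\<Sum>k<n. \<bar>x s j k\<bar>)"
    using pos[OF t j] j by (intro sum_pos2[of _ j]) (auto simp: less_imp_le)
  ultimately show ?thesis unfolding e1 e2 by (simp add: sgn_divide)
qed

lemma balanced:
  assumes t: "T \<le> s" and al: "\<not> misal n (x (Suc s))"
    and i: "i < n" and j: "j < n" and k: "k < n"
  shows "sgn (x (Suc s) i j) * sgn (x (Suc s) j k) * sgn (x (Suc s) k i) = 1"
proof -
  define b where "b = x (Suc s)"
  have t1: "T \<le> Suc s" using t by simp
  have nz: "\<And>a c. a < n \<Longrightarrow> c < n \<Longrightarrow> b a c \<noteq> 0" unfolding b_def using pos[OF t1] by fastforce
  have kk: "0 < b k k" unfolding b_def using diag_pos[OF t k] .
  define A where "A = b i j * b k j"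
  define B where "B = b i k * b k k"
  have A0: "A \<noteq> 0" unfolding A_def using nz i j k by simp
  have B0: "B \<noteq> 0" unfolding B_def using nz i j k by simp
  have n1: "\<not> (A > 0 \<and> B < 0)" using al i j k unfolding misal_def A_def B_def b_def by blast
  have n2: "\<not> (B > 0 \<and> A < 0)" using al i j k unfolding misal_def A_def B_def b_def by blast
  have "sgn A = sgn B" using A0 B0 n1 n2 by (auto simp: sgn_if)
  then have "sgn (b i j) * sgn (b k j) = sgn (b i k)"
    unfolding A_def B_def sgn_mult using kk by simp
  moreover have "sgn (b j k) = sgn (b k j)" unfolding b_def using sgn_sym[OF t j k] .
  moreover have "sgn (b k i) = sgn (b i k)" unfolding b_def using sgn_sym[OF t k i] .
  moreover have "sgn (b i k) * sgn (b i k) = 1" using nz[OF i k] by (auto simp: sgn_if)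
  ultimately show ?thesis unfolding b_def[symmetric]
    by (metis mult.commute mult.left_commute)
qed

end

lemma sign_block_carrier: "sign_block \<alpha> b \<in> carrier_mat (dim_vec b) (dim_vec b)"
  unfolding sign_block_def by auto

lemma sign_block_entry:
  assumes "k < dim_vec b" "l < dim_vec b"
  shows "sign_block \<alpha> b $$ (k,l) = \<alpha> * (b $ k * b $ l)"
  using assms unfolding sign_block_def mat_of_cols_def mat_of_rows_def
  by (simp add: scalar_prod_def row_def col_def)

lemma perm_conj_entry:
  assumes s: "\<sigma> permutes {..<n}" and B: "B \<in> carrier_mat n n" and i: "i < n" and j: "j < n"
  shows "(perm_mat n \<sigma> * B * transpose_mat (perm_mat n \<sigma>)) $$ (i,j) = B $$ (\<sigma> i, \<sigma> j)"
proof -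
  have si: "\<sigma> i < n" and sj: "\<sigma> j < n" using permutes_in_image[OF s] i j by auto
  define PB where "PB = perm_mat n \<sigma> * B"
  have PBc: "PB \<in> carrier_mat n n" unfolding PB_def perm_mat_def using B by auto
  have PBe: "PB $$ (i,k) = B $$ (\<sigma> i, k)" if k: "k < n" for k
  proof -
    have "PB $$ (i,k) = (\<Sum>l<n. (if \<sigma> i = l then 1 else 0) * B $$ (l,k))"
      unfolding PB_def perm_mat_def using B i k
      by (auto simp: scalar_prod_def row_def col_def lessThan_atLeast0 intro!: sum.cong)
    also have "\<dots> = (\<Sum>l<n. if l = \<sigma> i then B $$ (\<sigma> i, k) else 0)"
      by (intro sum.cong) auto
    finally show ?thesis using si by simp
  qed
  have "(PB * transpose_mat (perm_mat n \<sigma>)) $$ (i,j) = (\<Sum>k<n. PB $$ (i,k) * (if \<sigma> j = k then 1 else 0))"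
    using PBc i j unfolding perm_mat_def
    by (auto simp: index_mult_mat scalar_prod_def row_def col_def lessThan_atLeast0 intro!: sum.cong)
  also have "\<dots> = (\<Sum>k<n. if k = \<sigma> j then PB $$ (i, \<sigma> j) else 0)"
    by (intro sum.cong) auto
  also have "\<dots> = B $$ (\<sigma> i, \<sigma> j)" using sj PBe by simp
  finally show ?thesis unfolding PB_def .
qed

lemma pick2_0: "a < (b::nat) \<Longrightarrow> pick {a,b} 0 = a"
  by (auto intro!: Least_equality)
lemma pick2_1: "a < (b::nat) \<Longrightarrow> pick {a,b} (Suc 0) = b"
  using pick2_0[of a b] by (auto intro!: Least_equality)
lemma pick1_0: "pick {a::nat} 0 = a"
  by (auto intro!: Least_equality)

lemma rank_ge2_aux:
  assumes X: "X \<in> carrier_mat n n" and ab: "a < b" "b < n"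
    and z: "X $$ (b,a) = 0" and na: "X $$ (a,a) \<noteq> 0" and nb: "X $$ (b,b) \<noteq> 0"
  shows "2 \<le> mat_rank n X"
proof -
  have card: "{i. i < n \<and> i \<in> {a,b}} = {a,b}" using ab by auto
  have c2: "card {a,b} = 2" using ab by auto
  define S where "S = submatrix X {a,b} {a,b}"
  have Sd: "dim_row S = 2" "dim_col S = 2" unfolding S_def dim_submatrix using X card c2 by auto
  have Se: "S $$ (k,l) = X $$ (pick {a,b} k, pick {a,b} l)" if "k < 2" "l < 2" for k l
    unfolding S_def using that X card c2 by (intro submatrix_index) auto
  have Sc: "S \<in> carrier_mat 2 2" using Sd by auto
  have ut: "upper_triangular S"
    unfolding upper_triangular_def
  proof (intro allI impI)
    fix i j assume "i < dim_row S" "j < i"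
    then have "i = 1" "j = 0" using Sd by auto
    then show "S $$ (i,j) = 0" using Se[of 1 0] pick2_0[OF ab(1)] pick2_1[OF ab(1)] z by simp
  qed
  have "diag_mat S = [S $$ (0,0), S $$ (1,1)]"
    unfolding diag_mat_def using Sd by (simp add: upt_rec)
  then have "det S = X $$ (a,a) * X $$ (b,b)"
    using det_upper_triangular[OF ut Sc] Se[of 0 0] Se[of 1 1] pick2_0[OF ab(1)] pick2_1[OF ab(1)] by simp
  then have "det S \<noteq> 0" using na nb by simp
  then have "card {j. j < n \<and> j \<in> {a,b}} \<le> vec_space.rank n X"
    unfolding S_def by (intro vec_space.rank_gt_minor[OF X])
  then show ?thesis unfolding mat_rank_def card c2 .
qed

lemma rank_ge1_aux:
  assumes X: "X \<in> carrier_mat n n" and a: "a < n" and na: "X $$ (a,a) \<noteq> 0"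
  shows "1 \<le> mat_rank n X"
proof -
  have card: "{i. i < n \<and> i \<in> {a}} = {a}" using a by auto
  define S where "S = submatrix X {a} {a}"
  have Sd: "dim_row S = 1" "dim_col S = 1" unfolding S_def dim_submatrix using X card by auto
  have Se: "S $$ (0,0) = X $$ (a,a)"
    unfolding S_def using X card pick1_0[of a] by (subst submatrix_index) auto
  have Sc: "S \<in> carrier_mat 1 1" using Sd by auto
  have ut: "upper_triangular S" unfolding upper_triangular_def using Sd by auto
  have "diag_mat S = [S $$ (0,0)]" unfolding diag_mat_def using Sd by simp
  then have "det S = X $$ (a,a)" using det_upper_triangular[OF ut Sc] Se by simp
  then have "det S \<noteq> 0" using na by simp
  then have "card {j. j < n \<and> j \<in> {a}} \<le> vec_space.rank n X"
    unfolding S_def by (intro vec_space.rank_gt_minor[OF X])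
  then show ?thesis unfolding mat_rank_def card by simp
qed


lemma Q_rank1_struct:
  assumes n: "1 \<le> n" and Q: "Xs \<in> Q_HbM n" and r: "mat_rank n Xs = 1"
  shows "\<exists>\<alpha>>0. \<exists>c. (\<forall>i<n. c i = 1 \<or> c i = -1) \<and> Xs \<in> carrier_mat n n \<and>
           (\<forall>i<n. \<forall>j<n. Xs $$ (i,j) = \<alpha> * (c i * c j))"
proof -
  define sb where "sb = (\<lambda>p. case p of (\<alpha>, b) \<Rightarrow> sign_block \<alpha> (b :: real vec))"
  from Q obtain P bs where P: "is_perm_mat n P" and vb: "list_all valid_block bs"
    and Bc: "diag_block_mat (map sb bs) \<in> carrier_mat n n"
    and XsE: "Xs = P * diag_block_mat (map sb bs) * transpose_mat P"
    and nz: "Xs \<in> nz_row n"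
    unfolding Q_HbM_def sb_def by auto
  define B where "B = diag_block_mat (map sb bs)"
  have Bc': "B \<in> carrier_mat n n" using Bc unfolding B_def .
  obtain \<sigma> where s: "\<sigma> permutes {..<n}" and Pe: "P = perm_mat n \<sigma>" using P unfolding is_perm_mat_def by auto
  have Xc: "Xs \<in> carrier_mat n n" using nz unfolding nz_row_def by auto
  have Xe: "Xs $$ (i,j) = B $$ (\<sigma> i, \<sigma> j)" if "i < n" "j < n" for i j
    unfolding XsE Pe B_def[symmetric] using perm_conj_entry[OF s Bc' that] .
  have sn: "\<sigma> i < n" if "i < n" for i using permutes_in_image[OF s] that by auto
  have sb_eq: "sb p = sign_block (fst p) (snd p)" for p unfolding sb_def by (cases p) auto
  show ?thesis
  proof (cases bs)
    case Nil
    then show ?thesis using Bc n by auto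
  next
    case (Cons p1 rest)
    note bs1 = Cons
    show ?thesis
    proof (cases rest)
      case Nil
      obtain \<alpha> b where p1: "p1 = (\<alpha>, b)" by (cases p1)
      have Bsb: "B = sign_block \<alpha> b" unfolding B_def bs1 Nil p1 sb_def
        by (simp only: list.map prod.case diag_block_mat_singleton)
      have db: "dim_vec b = n" using Bc' sign_block_carrier[of \<alpha> b] unfolding Bsb by auto
      have v: "\<alpha> > 0" "\<forall>i<dim_vec b. b $ i \<in> {-1,1}" using vb unfolding bs1 Nil p1 valid_block_def by auto
      show ?thesis
      proof (intro exI conjI allI impI)
        show "\<alpha> > 0" using v by simp
        show "Xs \<in> carrier_mat n n" using Xc .
        fix i assume i: "i < n"
        show "b $ \<sigma> i = 1 \<or> b $ \<sigma> i = -1" using v(2) sn[OF i] db by auto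
      next
        fix i j assume i: "i < n" and j: "j < n"
        show "Xs $$ (i,j) = \<alpha> * (b $ \<sigma> i * b $ \<sigma> j)"
          unfolding Xe[OF i j] Bsb using sign_block_entry[of "\<sigma> i" b "\<sigma> j" \<alpha>] sn[OF i] sn[OF j] db by simp
      qed
    next
      case (Cons p2 rest2)
      obtain \<alpha>1 b1 where p1: "p1 = (\<alpha>1, b1)" by (cases p1)
      obtain \<alpha>2 b2 where p2: "p2 = (\<alpha>2, b2)" by (cases p2)
      have v1: "\<alpha>1 > 0" "dim_vec b1 > 0" "\<forall>i<dim_vec b1. b1 $ i \<in> {-1,1}"
        using vb unfolding bs1 Cons p1 valid_block_def by auto
      have v2: "\<alpha>2 > 0" "dim_vec b2 > 0" "\<forall>i<dim_vec b2. b2 $ i \<in> {-1,1}"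
        using vb unfolding bs1 Cons p2 valid_block_def by auto
      define A1 where "A1 = sign_block \<alpha>1 b1"
      define A2 where "A2 = sign_block \<alpha>2 b2"
      define R2 where "R2 = diag_block_mat (map sb rest2)"
      define R where "R = diag_block_mat (map sb (p2 # rest2))"
      define m where "m = dim_vec b1"
      have A1c: "A1 \<in> carrier_mat m m" unfolding A1_def m_def by (rule sign_block_carrier)
      have A2c: "A2 \<in> carrier_mat (dim_vec b2) (dim_vec b2)" unfolding A2_def by (rule sign_block_carrier)
      have Req: "R = four_block_mat A2 (0\<^sub>m (dim_row A2) (dim_col R2)) (0\<^sub>m (dim_row R2) (dim_col A2)) R2"
        unfolding R_def R2_def A2_def p2 sb_def by (simp add: Let_def)
      have Beq: "B = four_block_mat A1 (0\<^sub>m (dim_row A1) (dim_col R)) (0\<^sub>m (dim_row R) (dim_col A1)) R"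
        unfolding B_def R_def A1_def bs1 Cons p1 sb_def by (simp add: Let_def)
      have sq: "dim_col (diag_block_mat (map sb l)) = dim_row (diag_block_mat (map sb l))" for l
        unfolding dim_diag_block_mat
      proof (induction l)
        case Nil then show ?case by simp
      next
        case (Cons a l) then show ?case using sign_block_carrier[of "fst a" "snd a"] by (simp add: sb_eq)
      qed
      have R2sq: "dim_col R2 = dim_row R2" unfolding R2_def by (rule sq)
      have Rsq: "dim_col R = dim_row R" unfolding R_def by (rule sq)
      have Rdim: "dim_row R = dim_vec b2 + dim_row R2" using Req A2c by simp
      have Bdim: "n = m + dim_row R" using Bc' Beq A1c by auto
      have mn: "m < n" using Bdim Rdim v2 by simp
      have m0: "0 < m" using v1 unfolding m_def by simp
      have b1sq: "b1 $ 0 * b1 $ 0 = 1" using v1 by auto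
      have b2sq: "b2 $ 0 * b2 $ 0 = 1" using v2 by auto
      have B00: "B $$ (0,0) = \<alpha>1"
        unfolding Beq using A1c m0 Rsq b1sq by (simp add: A1_def sign_block_entry m_def)
      have R00: "R $$ (0,0) = \<alpha>2"
        unfolding Req using A2c v2 R2sq b2sq by (simp add: A2_def sign_block_entry)
      have Bmm: "B $$ (m,m) = \<alpha>2"
        unfolding Beq using A1c mn Bdim Rsq R00 by simp
      have B0m: "B $$ (0,m) = 0"
        unfolding Beq using A1c mn m0 Bdim Rsq by simp
      have Bm0: "B $$ (m,0) = 0"
        unfolding Beq using A1c mn m0 Bdim Rsq by simp
      define a where "a = Hilbert_Choice.inv \<sigma> 0"
      define b where "b = Hilbert_Choice.inv \<sigma> m"
      have sa: "\<sigma> a = 0" and sbb: "\<sigma> b = m" unfolding a_def b_def using permutes_inverses(1)[OF s] by auto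
      have an: "a < n" and bn: "b < n"
        unfolding a_def b_def using permutes_in_image[OF permutes_inv[OF s]] n mn by auto
      have ab: "a \<noteq> b" using sa sbb m0 by auto
      have Xaa: "Xs $$ (a,a) \<noteq> 0" using Xe[OF an an] sa B00 v1 by simp
      have Xbb: "Xs $$ (b,b) \<noteq> 0" using Xe[OF bn bn] sbb Bmm v2 by simp
      have Xab: "Xs $$ (a,b) = 0" using Xe[OF an bn] sa sbb B0m by simp
      have Xba: "Xs $$ (b,a) = 0" using Xe[OF bn an] sa sbb Bm0 by simp
      have "2 \<le> mat_rank n Xs"
      proof (cases "a < b")
        case True show ?thesis using rank_ge2_aux[OF Xc True bn Xba Xaa Xbb] by simp
      next
        case False then have "b < a" using ab by simp
        then show ?thesis using rank_ge2_aux[OF Xc _ an Xab Xbb Xaa] by simp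
      qed
      then show ?thesis using r by simp
    qed
  qed
qed

lemma Q_of_struct:
  assumes n: "1 \<le> n" and a: "0 < \<alpha>" and c: "\<forall>i<n. c i = 1 \<or> c i = -1"
  shows "mat n n (\<lambda>(i,j). \<alpha> * (c i * c j)) \<in> Q_HbM n \<and> mat_rank n (mat n n (\<lambda>(i,j). \<alpha> * (c i * c j))) = 1"
proof -
  define Xs where "Xs = mat n n (\<lambda>(i,j). \<alpha> * (c i * c j))"
  have Xc: "Xs \<in> carrier_mat n n" unfolding Xs_def by auto
  have cc: "c i * c i = 1" if "i < n" for i using c that by auto
  have nz: "Xs \<in> nz_row n" unfolding nz_row_def Xs_def using a cc by (auto intro!: exI)
  define b where "b = vec n c"
  have vb: "valid_block (\<alpha>, b)" unfolding valid_block_def b_def using a n c by auto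
  have Bc: "diag_block_mat (map (\<lambda>(\<alpha>, b). sign_block \<alpha> b) [(\<alpha>, b)]) \<in> carrier_mat n n"
    using sign_block_carrier[of \<alpha> b] unfolding b_def
    by (simp only: list.map prod.case diag_block_mat_singleton dim_vec)
  have Bs: "sign_block \<alpha> b \<in> carrier_mat n n" using sign_block_carrier[of \<alpha> b] unfolding b_def by simp
  have "Xs = perm_mat n id * sign_block \<alpha> b * transpose_mat (perm_mat n id)"
  proof (rule eq_matI)
    fix i j assume "i < dim_row (perm_mat n id * sign_block \<alpha> b * transpose_mat (perm_mat n id))"
      "j < dim_col (perm_mat n id * sign_block \<alpha> b * transpose_mat (perm_mat n id))"
    then have i: "i < n" and j: "j < n" unfolding perm_mat_def by auto
    show "Xs $$ (i,j) = (perm_mat n id * sign_block \<alpha> b * transpose_mat (perm_mat n id)) $$ (i,j)"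
      unfolding perm_conj_entry[OF permutes_id Bs i j] using i j
      by (simp add: Xs_def sign_block_entry b_def)
  qed (auto simp: Xs_def perm_mat_def)
  then have XsE: "Xs = perm_mat n id * diag_block_mat (map (\<lambda>(\<alpha>, b). sign_block \<alpha> b) [(\<alpha>, b)]) * transpose_mat (perm_mat n id)"
    by (simp only: list.map prod.case diag_block_mat_singleton)
  have isP: "is_perm_mat n (perm_mat n id)" unfolding is_perm_mat_def using permutes_id by blast
  have la: "list_all valid_block [(\<alpha>, b)]" using vb by simp
  have "Xs \<in> Q_HbM n"
    unfolding Q_HbM_def using nz Bc isP XsE la by blast
  moreover have "mat_rank n Xs \<le> 1"
    unfolding mat_rank_def
    by (rule vec_space.rank_le_1_product_entries[OF Xc, of "\<lambda>r. \<alpha> * c r" c]) (simp add: Xs_def)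
  moreover have "1 \<le> mat_rank n Xs"
    using rank_ge1_aux[OF Xc, of 0] n a cc[of 0] unfolding Xs_def by simp
  ultimately show ?thesis unfolding Xs_def by simp
qed


lemma iter_carrier: "X0 \<in> carrier_mat n n \<Longrightarrow> (f_HbM ^^ t) X0 \<in> carrier_mat n n"
  by (induction t) (auto intro: f_HbM_carrier)

lemma iter_hrec: assumes X0: "X0 \<in> carrier_mat n n"
  shows "hrec n (\<lambda>t i j. (f_HbM ^^ t) X0 $$ (i,j))"
  unfolding hrec_def using f_HbM_entry[OF iter_carrier[OF X0]] by simp

lemma min_abs_set: "{\<bar>X $$ (i,j)\<bar> | i j. i < n \<and> j < n} = (\<lambda>(i,j). \<bar>X $$ (i,j)\<bar>) ` ({..<n} \<times> {..<n})"
  by auto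

lemma min_abs_le: "i < n \<Longrightarrow> j < n \<Longrightarrow> min_abs_entry n X \<le> \<bar>X $$ (i,j)\<bar>"
  unfolding min_abs_entry_def min_abs_set by (rule Min_le) force+

lemma min_abs_ge: "0 < n \<Longrightarrow> (\<And>i j. i < n \<Longrightarrow> j < n \<Longrightarrow> e \<le> \<bar>X $$ (i,j)\<bar>) \<Longrightarrow> e \<le> min_abs_entry n X"
  unfolding min_abs_entry_def min_abs_set by (subst Min_ge_iff) auto

lemma pm_lemma: "u \<in> {-1,1} \<Longrightarrow> v \<in> {-1,1} \<Longrightarrow> w \<in> {-1,1} \<Longrightarrow> u * v * w = (1::real) \<Longrightarrow> v = u * w"
  by auto

lemma sgn_pm1: "(x::real) \<noteq> 0 \<Longrightarrow> sgn x \<in> {-1,1}"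
  by (auto simp: sgn_if)

lemma a_to_b:
  assumes n: "1 \<le> n" and X0: "X0 \<in> carrier_mat n n"
    and lim: "liminf (\<lambda>t. ereal (min_abs_entry n (traj X0 t))) > 0"
  shows "\<exists>t0>0. \<forall>t\<ge>t0. social_balance n (traj X0 t)"
proof -
  define x where "x t i j = traj X0 t $$ (i,j)" for t i j
  have hr: "hrec n x" using iter_hrec[OF X0] unfolding x_def traj_def .
  obtain e where e: "0 < ereal e" "ereal e < liminf (\<lambda>t. ereal (min_abs_entry n (traj X0 t)))"
    using ereal_dense2[OF lim] by blast
  have "eventually (\<lambda>t. ereal e < ereal (min_abs_entry n (traj X0 t))) sequentially"
    using less_LiminfD[OF e(2)] .
  then obtain T where T: "\<And>t. T \<le> t \<Longrightarrow> e < min_abs_entry n (traj X0 t)"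
    unfolding eventually_sequentially by auto
  have low: "\<And>t i j. T \<le> t \<Longrightarrow> i < n \<Longrightarrow> j < n \<Longrightarrow> e \<le> \<bar>x t i j\<bar>"
    unfolding x_def using T min_abs_le by (meson less_imp_le order_trans)
  interpret lowbd n x e T
    using hr n e(1) low by unfold_locales auto
  obtain t1 where t1: "\<forall>t\<ge>t1. \<not> misal n (x t)" using eventually_aligned by blast
  show ?thesis
  proof (intro exI[of _ "Suc (max T t1)"] conjI allI impI)
    fix t assume t: "Suc (max T t1) \<le> t"
    then obtain s where s: "t = Suc s" "T \<le> s" "t1 \<le> Suc s" by (cases t) auto
    show "social_balance n (traj X0 t)"
      unfolding social_balance_def
    proof (intro conjI allI impI)
      fix i assume i: "i < n"
      show "0 < traj X0 t $$ (i,i)" using diag_pos[OF s(2) i] unfolding x_def s(1) .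
    next
      fix i j k assume i: "i < n" and j: "j < n" and k: "k < n"
      show "sgn (traj X0 t $$ (i,j)) * sgn (traj X0 t $$ (j,k)) * sgn (traj X0 t $$ (k,i)) = 1"
        using balanced[OF s(2) _ i j k] t1 s unfolding x_def by auto
    qed
  qed simp
qed

lemma b_to_c:
  assumes n: "1 \<le> n" and X0: "X0 \<in> carrier_mat n n"
    and bal: "\<exists>t0>0. \<forall>t\<ge>t0. social_balance n (traj X0 t)"
  shows "\<exists>Xs \<in> Q_HbM n. mat_rank n Xs = 1 \<and>
                  (\<forall>i<n. \<forall>j<n. (\<lambda>t. traj X0 t $$ (i,j)) \<longlonglongrightarrow> Xs $$ (i,j))"
proof -
  define x where "x t i j = traj X0 t $$ (i,j)" for t i j
  have hr: "hrec n x" using iter_hrec[OF X0] unfolding x_def traj_def .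
  obtain t0 where sb: "social_balance n (traj X0 t0)" using bal by auto
  have tri: "sgn (x t0 i j) * sgn (x t0 j k) * sgn (x t0 k i) = 1" if "i < n" "j < n" "k < n" for i j k
    using sb that unfolding social_balance_def x_def by auto
  have dg: "0 < x t0 i i" if "i < n" for i using sb that unfolding social_balance_def x_def by auto
  have nz: "x t0 i j \<noteq> 0" if i: "i < n" and j: "j < n" for i j
    using tri[OF i j j] by auto
  have symm: "sgn (x t0 j 0) = sgn (x t0 0 j)" if j: "j < n" for j
  proof -
    have "sgn (x t0 0 j) * sgn (x t0 j j) * sgn (x t0 j 0) = 1" using tri[OF _ j j] n by auto
    then have "sgn (x t0 0 j) * sgn (x t0 j 0) = 1" using dg[OF j] by simp
    then show ?thesis using sgn_pm1[OF nz[OF _ j]] sgn_pm1[OF nz[OF j, of 0]] n by auto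
  qed
  define c where "c i = sgn (x t0 0 i)" for i
  have c: "\<forall>i<n. c i = 1 \<or> c i = -1"
  proof (intro allI impI)
    fix i assume i: "i < n"
    have "x t0 0 i \<noteq> 0" using nz[of 0 i] i n by simp
    then show "c i = 1 \<or> c i = -1" unfolding c_def by (auto simp: sgn_if)
  qed
  have x0: "\<forall>i<n. \<forall>j<n. x t0 i j = c i * c j * \<bar>x t0 i j\<bar> \<and> x t0 i j \<noteq> 0"
  proof (intro allI impI conjI)
    fix i j assume i: "i < n" and j: "j < n"
    show "x t0 i j \<noteq> 0" using nz i j by simp
    have "sgn (x t0 0 i) * sgn (x t0 i j) * sgn (x t0 j 0) = 1" using tri[OF _ i j] n by auto
    moreover have u: "sgn (x t0 0 i) \<in> {-1,1}" using sgn_pm1 nz[of 0 i] i n by simp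
    moreover have v: "sgn (x t0 i j) \<in> {-1,1}" using sgn_pm1 nz[OF i j] by simp
    moreover have w: "sgn (x t0 j 0) \<in> {-1,1}" using sgn_pm1 nz[of j 0] j n by simp
    ultimately have "sgn (x t0 i j) = sgn (x t0 0 i) * sgn (x t0 j 0)"
      using pm_lemma by blast
    then have "sgn (x t0 i j) = c i * c j" unfolding c_def symm[OF j] .
    then show "x t0 i j = c i * c j * \<bar>x t0 i j\<bar>" by (metis sgn_mult_abs)
  qed
  define y where "y s i j = x (s + t0) i j" for s i j
  have hy: "hrec n y" using hr unfolding hrec_def y_def by simp
  have y0: "\<forall>i<n. \<forall>j<n. y 0 i j = c i * c j * \<bar>y 0 i j\<bar> \<and> y 0 i j \<noteq> 0"
    using x0 unfolding y_def by simp
  obtain Lim where Lim: "0 < Lim" "\<forall>i<n. \<forall>j<n. (\<lambda>s. \<bar>y s i j\<bar>) \<longlonglongrightarrow> Lim"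
    using prec_converge[OF gauge_prec[OF hy c y0]] n by auto
  define Xs where "Xs = mat n n (\<lambda>(i,j). Lim * (c i * c j))"
  have Q: "Xs \<in> Q_HbM n \<and> mat_rank n Xs = 1" unfolding Xs_def by (rule Q_of_struct[OF n Lim(1) c])
  have "(\<lambda>t. traj X0 t $$ (i,j)) \<longlonglongrightarrow> Xs $$ (i,j)" if i: "i < n" and j: "j < n" for i j
  proof -
    have "(\<lambda>s. c i * c j * \<bar>y s i j\<bar>) \<longlonglongrightarrow> c i * c j * Lim"
      using Lim(2) i j by (intro tendsto_intros) auto
    moreover have "(\<lambda>s. c i * c j * \<bar>y s i j\<bar>) = (\<lambda>s. x (s + t0) i j)"
      using gauge_inv[OF hy c y0] i j unfolding y_def by (auto simp: fun_eq_iff)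
    ultimately have "(\<lambda>s. x (s + t0) i j) \<longlonglongrightarrow> Xs $$ (i,j)"
      unfolding Xs_def using i j by (simp add: mult.commute mult.left_commute)
    then show ?thesis unfolding x_def by (rule LIMSEQ_offset)
  qed
  then show ?thesis using Q by blast
qed

lemma c_to_a:
  assumes n: "1 \<le> n" and X0: "X0 \<in> carrier_mat n n"
    and cv: "\<exists>Xs \<in> Q_HbM n. mat_rank n Xs = 1 \<and>
                  (\<forall>i<n. \<forall>j<n. (\<lambda>t. traj X0 t $$ (i,j)) \<longlonglongrightarrow> Xs $$ (i,j))"
  shows "liminf (\<lambda>t. ereal (min_abs_entry n (traj X0 t))) > 0"
proof -
  obtain Xs where Q: "Xs \<in> Q_HbM n" "mat_rank n Xs = 1"
    and lim: "\<forall>i<n. \<forall>j<n. (\<lambda>t. traj X0 t $$ (i,j)) \<longlonglongrightarrow> Xs $$ (i,j)" using cv by blast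
  obtain \<alpha> c where a: "0 < \<alpha>" and c: "\<forall>i<n. c i = 1 \<or> c i = -1"
    and Xe: "\<forall>i<n. \<forall>j<n. Xs $$ (i,j) = \<alpha> * (c i * c j)"
    using Q_rank1_struct[OF n Q] by blast
  have ev: "eventually (\<lambda>t. \<alpha> / 2 < \<bar>traj X0 t $$ (i,j)\<bar>) sequentially" if ij: "(i,j) \<in> {..<n} \<times> {..<n}" for i j
  proof -
    from ij have i: "i < n" and j: "j < n" by auto
    have "(\<lambda>t. \<bar>traj X0 t $$ (i,j)\<bar>) \<longlonglongrightarrow> \<bar>Xs $$ (i,j)\<bar>" using lim i j by (intro tendsto_intros) auto
    moreover have "\<bar>Xs $$ (i,j)\<bar> = \<alpha>"
    proof -
      have "\<bar>c i * c j\<bar> = 1" using c i j by (intro cc_abs) auto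
      then show ?thesis using Xe a i j by (simp add: abs_mult[of \<alpha>])
    qed
    ultimately show ?thesis using a by (intro order_tendstoD(1)) auto
  qed
  have "eventually (\<lambda>t. \<forall>p\<in>{..<n} \<times> {..<n}. \<alpha> / 2 < \<bar>traj X0 t $$ p\<bar>) sequentially"
    using ev by (intro eventually_ball_finite) auto
  then have "eventually (\<lambda>t. ereal (\<alpha> / 2) \<le> ereal (min_abs_entry n (traj X0 t))) sequentially"
  proof (rule eventually_mono)
    fix t assume h: "\<forall>p\<in>{..<n} \<times> {..<n}. \<alpha> / 2 < \<bar>traj X0 t $$ p\<bar>"
    have "\<alpha> / 2 \<le> min_abs_entry n (traj X0 t)"
      using n h by (intro min_abs_ge) (auto intro: less_imp_le)
    then show "ereal (\<alpha> / 2) \<le> ereal (min_abs_entry n (traj X0 t))" by simp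
  qed
  then have "ereal (\<alpha> / 2) \<le> liminf (\<lambda>t. ereal (min_abs_entry n (traj X0 t)))"
    by (rule Liminf_bounded)
  moreover have "0 < ereal (\<alpha> / 2)" using a by simp
  ultimately show ?thesis by (meson less_le_trans)
qed


lemma part_i:
  assumes n: "1 \<le> n" and Q: "Xs \<in> Q_HbM n" and r: "mat_rank n Xs = 1"
  shows "locally_stable_fp n f_HbM Xs"
proof -
  obtain \<alpha> c where a: "0 < \<alpha>" and c: "\<forall>i<n. c i = 1 \<or> c i = -1" and Xc: "Xs \<in> carrier_mat n n"
    and Xe: "\<forall>i<n. \<forall>j<n. Xs $$ (i,j) = \<alpha> * (c i * c j)"
    using Q_rank1_struct[OF n Q r] by blast
  have cc: "c k * c k = 1" if "k < n" for k using c that by auto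
  have cabs: "\<bar>c i * c j\<bar> = 1" if "i < n" "j < n" for i j using c that by (intro cc_abs) auto
  have fxp: "f_HbM Xs = Xs"
  proof (rule eq_matI)
    fix i j assume "i < dim_row Xs" "j < dim_col Xs"
    then have i: "i < n" and j: "j < n" using Xc by auto
    have s1: "(\<Sum>k<n. Xs $$ (i,k) * Xs $$ (j,k)) = (\<Sum>k<n. \<alpha> * \<alpha> * (c i * c j) * (c k * c k))"
      using Xe i j by (intro sum.cong) (auto simp: algebra_simps)
    also have "\<dots> = (\<Sum>k<n. \<alpha> * \<alpha> * (c i * c j))" using cc by (intro sum.cong) auto
    finally have s1': "(\<Sum>k<n. Xs $$ (i,k) * Xs $$ (j,k)) = n * (\<alpha> * \<alpha> * (c i * c j))" by simp
    have s2: "(\<Sum>k<n. \<bar>Xs $$ (i,k)\<bar>) = (\<Sum>k<n. \<alpha>)"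
      using Xe i cabs a by (intro sum.cong) (auto simp: abs_mult)
    show "f_HbM Xs $$ (i,j) = Xs $$ (i,j)"
      unfolding f_HbM_entry[OF Xc i j] s1' s2 using Xe i j a n by simp
  qed (use f_HbM_carrier[OF Xc] Xc in auto)
  show ?thesis
    unfolding locally_stable_fp_def
  proof (intro conjI allI impI)
    show "f_HbM Xs = Xs" by (rule fxp)
    fix \<epsilon> :: real assume eps: "0 < \<epsilon>"
    define \<zeta> where "\<zeta> = min \<epsilon> (\<alpha> / 2)"
    have z: "0 < \<zeta>" "\<zeta> \<le> \<epsilon>" "\<zeta> \<le> \<alpha> / 2" unfolding \<zeta>_def using eps a by auto
    show "\<exists>\<zeta>>0. \<forall>X0\<in>carrier_mat n n. (\<forall>i<n. \<forall>j<n. \<bar>X0 $$ (i,j) - Xs $$ (i,j)\<bar> < \<zeta>) \<longrightarrow>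
        (\<forall>t i. i < n \<longrightarrow> (\<forall>j<n. \<bar>(f_HbM ^^ t) X0 $$ (i,j) - Xs $$ (i,j)\<bar> < \<epsilon>))"
    proof (intro exI[of _ \<zeta>] conjI ballI impI allI)
      show "0 < \<zeta>" by (rule z)
      fix X0 t i j assume X0: "X0 \<in> carrier_mat n n"
        and close: "\<forall>i<n. \<forall>j<n. \<bar>X0 $$ (i,j) - Xs $$ (i,j)\<bar> < \<zeta>" and i: "i < n" and j: "j < n"
      define x where "x t i j = (f_HbM ^^ t) X0 $$ (i,j)" for t i j
      have hr: "hrec n x" using iter_hrec[OF X0] unfolding x_def .
      have key: "c i * c j * x 0 i j - \<alpha> = c i * c j * (x 0 i j - Xs $$ (i,j))" if "i < n" "j < n" for i j
        using Xe that cc[of i] cc[of j] unfolding x_def by (auto simp: algebra_simps)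
      have cl: "\<bar>c i * c j * x 0 i j - \<alpha>\<bar> < \<zeta>" if "i < n" "j < n" for i j
        using key[OF that] close that cabs[OF that] unfolding x_def by (auto simp: abs_mult)
      have ppos: "0 < c i * c j * x 0 i j" if "i < n" "j < n" for i j
        using cl[OF that] z by linarith
      have absx: "\<bar>x 0 i j\<bar> = c i * c j * x 0 i j" if "i < n" "j < n" for i j
      proof -
        have "\<bar>c i * c j * x 0 i j\<bar> = \<bar>x 0 i j\<bar>" using cabs[OF that] by (simp add: abs_mult)
        then show ?thesis using ppos[OF that] by simp
      qed
      have x0: "\<forall>i<n. \<forall>j<n. x 0 i j = c i * c j * \<bar>x 0 i j\<bar> \<and> x 0 i j \<noteq> 0"
      proof (intro allI impI conjI)
        fix i j assume i: "i < n" and j: "j < n"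
        have "c i * c j * \<bar>x 0 i j\<bar> = (c i * c i) * (c j * c j) * x 0 i j"
          unfolding absx[OF i j] by (simp add: algebra_simps)
        then show "x 0 i j = c i * c j * \<bar>x 0 i j\<bar>" using cc[OF i] cc[OF j] by simp
        show "x 0 i j \<noteq> 0" using ppos[OF i j] by auto
      qed
      define a0 where "a0 = (\<lambda>t i j. \<bar>x t i j\<bar>)"
      have pr: "prec n a0" unfolding a0_def by (rule gauge_prec[OF hr c x0])
      have bnd0: "\<bar>a0 0 i j - \<alpha>\<bar> < \<zeta>" if "i < n" "j < n" for i j
        using cl[OF that] absx[OF that] unfolding a0_def by simp
      have npos: "0 < n" using n by simp
      obtain k0 l0 where kl0: "k0 < n" "l0 < n" "a0 0 k0 l0 = mna n (a0 0)" using mna_attained[OF npos, of "a0 0"] by blast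
      obtain k1 l1 where kl1: "k1 < n" "l1 < n" "a0 0 k1 l1 = mxa n (a0 0)" using mxa_attained[OF npos, of "a0 0"] by blast
      have "\<forall>i<n. \<forall>j<n. mna n (a0 0) \<le> a0 t i j \<and> a0 t i j \<le> mxa n (a0 0)"
        using prec_bounds_all[OF pr] mna_le mxa_ge by blast
      then have "mna n (a0 0) \<le> a0 t i j" "a0 t i j \<le> mxa n (a0 0)" using i j by auto
      moreover have "\<alpha> - \<zeta> < mna n (a0 0)" "mxa n (a0 0) < \<alpha> + \<zeta>"
        using bnd0[OF kl0(1,2)] bnd0[OF kl1(1,2)] kl0(3) kl1(3) by auto
      ultimately have "\<bar>a0 t i j - \<alpha>\<bar> < \<zeta>" by auto
      moreover have "x t i j = c i * c j * a0 t i j"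
        using gauge_inv[OF hr c x0] i j unfolding a0_def by auto
      moreover have "\<bar>x t i j - Xs $$ (i,j)\<bar> = \<bar>c i * c j\<bar> * \<bar>a0 t i j - \<alpha>\<bar>"
        if "x t i j = c i * c j * a0 t i j"
        using that Xe i j by (simp add: abs_mult[symmetric] algebra_simps)
      ultimately have "\<bar>x t i j - Xs $$ (i,j)\<bar> < \<zeta>" using cabs[OF i j] by simp
      then show "\<bar>(f_HbM ^^ t) X0 $$ (i,j) - Xs $$ (i,j)\<bar> < \<epsilon>" using z unfolding x_def by simp
    qed
  qed
qed

theorem theorem3p7:
  fixes n :: nat
  assumes "n \<ge> 1"
  shows "(\<forall>Xs \<in> Q_HbM n. mat_rank n Xs = 1 \<longrightarrow> locally_stable_fp n f_HbM Xs)
    \<and> (\<forall>X0 \<in> nz_row n.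
         ((liminf (\<lambda>t. ereal (min_abs_entry n (traj X0 t))) > 0)
            \<longleftrightarrow> (\<exists>t0>0. \<forall>t\<ge>t0. social_balance n (traj X0 t)))
       \<and> ((\<exists>t0>0. \<forall>t\<ge>t0. social_balance n (traj X0 t))
            \<longleftrightarrow> (\<exists>Xs \<in> Q_HbM n. mat_rank n Xs = 1 \<and>
                  (\<forall>i<n. \<forall>j<n. (\<lambda>t. traj X0 t $$ (i,j)) \<longlonglongrightarrow> Xs $$ (i,j)))))"
proof (intro conjI ballI impI)
  fix Xs assume "Xs \<in> Q_HbM n" "mat_rank n Xs = 1"
  then show "locally_stable_fp n f_HbM Xs" using part_i assms by blast
next
  fix X0 assume "X0 \<in> nz_row n"
  then have X0: "X0 \<in> carrier_mat n n" unfolding nz_row_def by auto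
  note ab = a_to_b[OF assms X0] and bc = b_to_c[OF assms X0] and ca = c_to_a[OF assms X0]
  show "(liminf (\<lambda>t. ereal (min_abs_entry n (traj X0 t))) > 0)
            \<longleftrightarrow> (\<exists>t0>0. \<forall>t\<ge>t0. social_balance n (traj X0 t))"
    using ab bc ca by blast
  show "(\<exists>t0>0. \<forall>t\<ge>t0. social_balance n (traj X0 t))
            \<longleftrightarrow> (\<exists>Xs \<in> Q_HbM n. mat_rank n Xs = 1 \<and>
                  (\<forall>i<n. \<forall>j<n. (\<lambda>t. traj X0 t $$ (i,j)) \<longlonglongrightarrow> Xs $$ (i,j)))"
    using ab bc ca by blast
qed

end
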